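(* Let $k>d$, let $\mathbf X\in\mathbb R^{k\times d}$ have full column rank $d$ and rows $\mathbf x_i^\top$, and let $\mathbf y\in\mathbb R^k$. Then $\mathbf X^+\mathbf y=\sum_{i=1}^k\dfrac{\det(\mathbf X_{-i}^\top\mathbf X_{-i})}{(k-d)\det(\mathbf X^\top\mathbf X)}\,\mathbf X_{-i}^+\mathbf y_{-i}$, where $\mathbf X_{-i}$ is $\mathbf X$ with its $i$-th row removed, $\mathbf y_{-i}$ is $\mathbf y$ with its $i$-th entry removed, and $^+$ denotes the Moore–Penrose pseudoinverse. *)

theory Defs
  imports "Jordan_Normal_Form.DL_Rank" "Jordan_Normal_Form.Determinant"
begin

text \<open>Moore--Penrose pseudoinverse of a real matrix: the unique matrix satisfying
  the four Penrose conditions (for real matrices the conjugate transpose is the transpose).\<close>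
definition pinv :: "real mat \<Rightarrow> real mat" where
  "pinv A = (THE B. B \<in> carrier_mat (dim_col A) (dim_row A) \<and>
      A * B * A = A \<and> B * A * B = B \<and>
      transpose_mat (A * B) = A * B \<and> transpose_mat (B * A) = B * A)"

text \<open>Matrix with row i removed (rows indexed from 0).\<close>
definition del_row :: "'a mat \<Rightarrow> nat \<Rightarrow> 'a mat" where
  "del_row A i = mat (dim_row A - 1) (dim_col A)
      (\<lambda>(r, c). A $$ (if r < i then r else Suc r, c))"

definition del_entry :: "'a vec \<Rightarrow> nat \<Rightarrow> 'a vec" where
  "del_entry v i = vec (dim_vec v - 1) (\<lambda>r. v $ (if r < i then r else Suc r))"

end

theory Submission
  imports Defs
begin


definition outer :: "real vec \<Rightarrow> real vec \<Rightarrow> real mat" where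
  "outer a b = mat (dim_vec a) (dim_vec b) (\<lambda>(i,j). a $ i * b $ j)"

lemma outer_carrier[simp]: "a \<in> carrier_vec n \<Longrightarrow> b \<in> carrier_vec m \<Longrightarrow> outer a b \<in> carrier_mat n m"
  unfolding outer_def by auto

lemma outer_index[simp]: "i < dim_vec a \<Longrightarrow> j < dim_vec b \<Longrightarrow> outer a b $$ (i,j) = a $ i * b $ j"
  "dim_row (outer a b) = dim_vec a" "dim_col (outer a b) = dim_vec b"
  unfolding outer_def by auto

lemma col_outer: "j < dim_vec b \<Longrightarrow> col (outer a b) j = b $ j \<cdot>\<^sub>v a"
  by (intro eq_vecI) auto

lemma row_outer: "i < dim_vec a \<Longrightarrow> row (outer a b) i = a $ i \<cdot>\<^sub>v b"
  by (intro eq_vecI) auto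

lemma mult_outer_left:
  assumes M: "M \<in> carrier_mat m n" and a: "a \<in> carrier_vec n"
  shows "M * outer a b = outer (M *\<^sub>v a) b"
  using M a by (intro eq_matI) (auto simp: col_outer)

lemma mult_outer_right:
  assumes M: "M \<in> carrier_mat n m" and b: "b \<in> carrier_vec n"
  shows "outer a b * M = outer a (transpose_mat M *\<^sub>v b)"
  using M b by (intro eq_matI) (auto simp: row_outer comm_scalar_prod[of _ n])

lemma outer_mult_vec:
  assumes b: "b \<in> carrier_vec n" and v: "v \<in> carrier_vec n"
  shows "outer a b *\<^sub>v v = (b \<bullet> v) \<cdot>\<^sub>v a"
  using b v by (intro eq_vecI) (auto simp: row_outer)

lemma det_rank_one:
  assumes u: "u \<in> carrier_vec n" and x: "x \<in> carrier_vec n"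
  shows "det (1\<^sub>m n - outer u x) = 1 - x \<bullet> u"
proof -
  define U :: "real mat" where "U = mat n 1 (\<lambda>(i,_). u $ i)"
  define V :: "real mat" where "V = mat 1 n (\<lambda>(_,j). x $ j)"
  have U: "U \<in> carrier_mat n 1" and V: "V \<in> carrier_mat 1 n" unfolding U_def V_def by auto
  have UV: "U * V = outer u x" using u x unfolding U_def V_def
    by (intro eq_matI) (auto simp: scalar_prod_def)
  have VU: "V * U = mat 1 1 (\<lambda>_. x \<bullet> u)" using u x unfolding U_def V_def
    by (intro eq_matI) (auto simp: scalar_prod_def)
  have UVc: "U * V \<in> carrier_mat n n" using U V by simp
  have VUc: "V * U \<in> carrier_mat 1 1" using U V by simp
  define M where "M = four_block_mat (1\<^sub>m n) U V (1\<^sub>m 1)"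
  have "four_block_mat (1\<^sub>m n) U (0\<^sub>m 1 n) (1\<^sub>m 1) * four_block_mat (1\<^sub>m n - U * V) (0\<^sub>m n 1) V (1\<^sub>m 1)
     = four_block_mat (1\<^sub>m n * (1\<^sub>m n - U * V) + U * V) (1\<^sub>m n * 0\<^sub>m n 1 + U * 1\<^sub>m 1)
        (0\<^sub>m 1 n * (1\<^sub>m n - U * V) + 1\<^sub>m 1 * V) (0\<^sub>m 1 n * 0\<^sub>m n 1 + 1\<^sub>m 1 * 1\<^sub>m 1)"
    by (rule mult_four_block_mat) (use U V UVc in auto)
  also have "\<dots> = M" unfolding M_def using U V UVc
    by (intro cong_four_block_mat; intro eq_matI) auto
  finally have M1: "M = four_block_mat (1\<^sub>m n) U (0\<^sub>m 1 n) (1\<^sub>m 1) * four_block_mat (1\<^sub>m n - U * V) (0\<^sub>m n 1) V (1\<^sub>m 1)" by simp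
  have "four_block_mat (1\<^sub>m n) (0\<^sub>m n 1) V (1\<^sub>m 1 - V * U) * four_block_mat (1\<^sub>m n) U (0\<^sub>m 1 n) (1\<^sub>m 1)
     = four_block_mat (1\<^sub>m n * 1\<^sub>m n + 0\<^sub>m n 1 * 0\<^sub>m 1 n) (1\<^sub>m n * U + 0\<^sub>m n 1 * 1\<^sub>m 1)
        (V * 1\<^sub>m n + (1\<^sub>m 1 - V * U) * 0\<^sub>m 1 n) (V * U + (1\<^sub>m 1 - V * U) * 1\<^sub>m 1)"
    by (rule mult_four_block_mat) (use U V VUc in auto)
  also have "\<dots> = M" unfolding M_def using U V VUc
    by (intro cong_four_block_mat; intro eq_matI) auto
  finally have M2: "M = four_block_mat (1\<^sub>m n) (0\<^sub>m n 1) V (1\<^sub>m 1 - V * U) * four_block_mat (1\<^sub>m n) U (0\<^sub>m 1 n) (1\<^sub>m 1)" by simp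
  have e1: "det (four_block_mat (1\<^sub>m n) U (0\<^sub>m 1 n) (1\<^sub>m 1)) = 1"
    by (subst det_four_block_mat_lower_left_zero[of _ n _ 1]) (use U in auto)
  have e2: "det (four_block_mat (1\<^sub>m n - U * V) (0\<^sub>m n 1) V (1\<^sub>m 1)) = det (1\<^sub>m n - U * V)"
    by (subst det_four_block_mat_upper_right_zero[of _ n _ 1]) (use U V UVc in auto)
  have e3: "det (four_block_mat (1\<^sub>m n) (0\<^sub>m n 1) V (1\<^sub>m 1 - V * U)) = det (1\<^sub>m 1 - V * U)"
    by (subst det_four_block_mat_upper_right_zero[of _ n _ 1]) (use U V VUc in auto)
  have d1: "det M = det (1\<^sub>m n - U * V)"
    unfolding M1 by (subst det_mult[of _ "n+1"]) (use U V UVc e1 e2 in auto)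
  have d2: "det M = det (1\<^sub>m 1 - V * U)"
    unfolding M2 by (subst det_mult[of _ "n+1"]) (use U V VUc e1 e3 in auto)
  have "det (1\<^sub>m 1 - V * U) = 1 - x \<bullet> u"
    by (subst det_single) (use VUc in \<open>auto simp: VU\<close>)
  thus ?thesis using d1 d2 UV by simp
qed



lemma sum_skip:
  fixes f :: "nat \<Rightarrow> real"
  assumes i: "i < k"
  shows "(\<Sum>r\<in>{0..<k-1}. f (if r < i then r else Suc r)) = (\<Sum>r\<in>{0..<k}. f r) - f i"
proof -
  define g where "g r = (if r < i then r else Suc r)" for r
  have inj: "inj_on g {0..<k-1}" unfolding g_def inj_on_def by auto
  have img: "g ` {0..<k-1} = {0..<k} - {i}"
  proof
    show "g ` {0..<k-1} \<subseteq> {0..<k} - {i}" unfolding g_def using i by auto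
    show "{0..<k} - {i} \<subseteq> g ` {0..<k-1}"
    proof
      fix r assume r: "r \<in> {0..<k} - {i}"
      show "r \<in> g ` {0..<k-1}"
      proof (cases "r < i")
        case True thus ?thesis using r i unfolding g_def by (intro image_eqI[of _ _ r]) auto
      next
        case False thus ?thesis using r i unfolding g_def by (intro image_eqI[of _ _ "r - 1"]) auto
      qed
    qed
  qed
  have "(\<Sum>r\<in>{0..<k-1}. f (g r)) = (\<Sum>r\<in>{0..<k} - {i}. f r)"
    using sum.reindex[OF inj, of f] img by simp
  also have "\<dots> = (\<Sum>r\<in>{0..<k}. f r) - f i" using i by (simp add: sum_diff1)
  finally show ?thesis unfolding g_def .
qed

lemma del_row_carrier: "X \<in> carrier_mat k d \<Longrightarrow> del_row X i \<in> carrier_mat (k-1) d"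
  unfolding del_row_def by auto

lemma del_row_index: "r < dim_row X - 1 \<Longrightarrow> c < dim_col X \<Longrightarrow> del_row X i $$ (r, c) = X $$ (if r < i then r else Suc r, c)"
  unfolding del_row_def by auto

lemma del_entry_carrier: "y \<in> carrier_vec k \<Longrightarrow> del_entry y i \<in> carrier_vec (k-1)"
  unfolding del_entry_def by auto

lemma gram_del_row:
  fixes X :: "real mat"
  assumes X: "X \<in> carrier_mat k d" and i: "i < k"
  shows "transpose_mat (del_row X i) * del_row X i = transpose_mat X * X - outer (row X i) (row X i)"
proof (rule eq_matI)
  fix a b assume ab: "a < dim_row (transpose_mat X * X - outer (row X i) (row X i))"
    "b < dim_col (transpose_mat X * X - outer (row X i) (row X i))"
  hence a: "a < d" and b: "b < d" using X by auto
  have "(transpose_mat (del_row X i) * del_row X i) $$ (a, b)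
      = (\<Sum>r\<in>{0..<k-1}. (\<lambda>r. X $$ (r, a) * X $$ (r, b)) (if r < i then r else Suc r))"
    using X a b by (auto simp: del_row_def scalar_prod_def intro!: sum.cong)
  also have "\<dots> = (\<Sum>r\<in>{0..<k}. X $$ (r, a) * X $$ (r, b)) - X $$ (i, a) * X $$ (i, b)"
    by (rule sum_skip[OF i])
  also have "\<dots> = (transpose_mat X * X - outer (row X i) (row X i)) $$ (a, b)"
    using X a b i by (auto simp: scalar_prod_def)
  finally show "(transpose_mat (del_row X i) * del_row X i) $$ (a, b) = (transpose_mat X * X - outer (row X i) (row X i)) $$ (a, b)" .
qed (use X in \<open>auto simp: del_row_def\<close>)

lemma gramy_del_row:
  fixes X :: "real mat"
  assumes X: "X \<in> carrier_mat k d" and i: "i < k" and y: "y \<in> carrier_vec k"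
  shows "transpose_mat (del_row X i) *\<^sub>v del_entry y i = transpose_mat X *\<^sub>v y - (y $ i) \<cdot>\<^sub>v row X i"
proof (rule eq_vecI)
  fix a assume "a < dim_vec (transpose_mat X *\<^sub>v y - (y $ i) \<cdot>\<^sub>v row X i)"
  hence a: "a < d" using X by auto
  have "(transpose_mat (del_row X i) *\<^sub>v del_entry y i) $ a
      = (\<Sum>r\<in>{0..<k-1}. (\<lambda>r. X $$ (r, a) * y $ r) (if r < i then r else Suc r))"
    using X a y by (auto simp: del_row_def del_entry_def scalar_prod_def intro!: sum.cong)
  also have "\<dots> = (\<Sum>r\<in>{0..<k}. X $$ (r, a) * y $ r) - X $$ (i, a) * y $ i"
    by (rule sum_skip[OF i])
  also have "\<dots> = (transpose_mat X *\<^sub>v y - (y $ i) \<cdot>\<^sub>v row X i) $ a"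
    using X a i y by (auto simp: scalar_prod_def)
  finally show "(transpose_mat (del_row X i) *\<^sub>v del_entry y i) $ a = (transpose_mat X *\<^sub>v y - (y $ i) \<cdot>\<^sub>v row X i) $ a" .
qed (use X y in \<open>auto simp: del_row_def del_entry_def\<close>)



lemma smult_mat_vec: "M \<in> carrier_mat m n \<Longrightarrow> v \<in> carrier_vec n \<Longrightarrow> (c \<cdot>\<^sub>m M) *\<^sub>v v = c \<cdot>\<^sub>v (M *\<^sub>v v)"
  by (intro eq_vecI) (auto intro!: smult_scalar_prod_distrib[of _ n])

lemma transpose_outer: "transpose_mat (outer a b) = outer b a"
  by (intro eq_matI) auto

lemma det_update:
  fixes A Ainv :: "real mat"
  assumes A: "A \<in> carrier_mat n n" and Ai: "Ainv \<in> carrier_mat n n" and AAi: "A * Ainv = 1\<^sub>m n"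
    and x: "x \<in> carrier_vec n"
  shows "det (A - outer x x) = det A * (1 - x \<bullet> (Ainv *\<^sub>v x))"
proof -
  define u where "u = Ainv *\<^sub>v x"
  have u: "u \<in> carrier_vec n" using Ai x unfolding u_def by simp
  have Au: "A *\<^sub>v u = x" unfolding u_def using A Ai x AAi by (simp flip: assoc_mult_mat_vec)
  have "A * (1\<^sub>m n - outer u x) = A * 1\<^sub>m n - A * outer u x"
    by (rule mult_minus_distrib_mat) (use A u x in auto)
  also have "\<dots> = A - outer x x" using A u by (simp add: mult_outer_left Au)
  finally have eq: "A - outer x x = A * (1\<^sub>m n - outer u x)" by simp
  have "det (A - outer x x) = det A * det (1\<^sub>m n - outer u x)"
    unfolding eq by (rule det_mult) (use A u x in auto)
  also have "det (1\<^sub>m n - outer u x) = 1 - x \<bullet> u" by (rule det_rank_one[OF u x])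
  finally show ?thesis unfolding u_def .
qed

lemma inv_update:
  fixes A Ainv :: "real mat"
  assumes A: "A \<in> carrier_mat n n" and Ai: "Ainv \<in> carrier_mat n n" and AAi: "A * Ainv = 1\<^sub>m n"
    and AiA: "Ainv * A = 1\<^sub>m n" and At: "transpose_mat A = A"
    and x: "x \<in> carrier_vec n" and h: "x \<bullet> (Ainv *\<^sub>v x) \<noteq> 1"
  shows "(Ainv + (1 / (1 - x \<bullet> (Ainv *\<^sub>v x))) \<cdot>\<^sub>m outer (Ainv *\<^sub>v x) (Ainv *\<^sub>v x)) * (A - outer x x) = 1\<^sub>m n"
proof -
  define u where "u = Ainv *\<^sub>v x"
  define h where "h = x \<bullet> u"
  define c where "c = 1 / (1 - h)"
  have u: "u \<in> carrier_vec n" using Ai x unfolding u_def by simp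
  have Au: "A *\<^sub>v u = x" unfolding u_def using A Ai x AAi by (simp flip: assoc_mult_mat_vec)
  have hc: "c * (1 - h) = 1" using h unfolding c_def h_def u_def by simp
  have hc': "\<And>z. c * ((1 - h) * z) = z" using hc by (metis mult.assoc mult_1)
  have Ax: "A - outer x x \<in> carrier_mat n n" using A x by (intro minus_carrier_mat) auto
  have t1: "Ainv * (A - outer x x) = 1\<^sub>m n - outer u x"
  proof -
    have "Ainv * (A - outer x x) = Ainv * A - Ainv * outer x x"
      by (rule mult_minus_distrib_mat) (use A Ai x in auto)
    thus ?thesis using AiA Ai x by (simp add: mult_outer_left u_def)
  qed
  have Axu: "(A - outer x x) *\<^sub>v u = (1 - h) \<cdot>\<^sub>v x"
  proof -
    have "(A - outer x x) *\<^sub>v u = A *\<^sub>v u - outer x x *\<^sub>v u"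
      by (rule minus_mult_distrib_mat_vec) (use A x u in auto)
    also have "\<dots> = (1 - h) \<cdot>\<^sub>v x" using x u Au unfolding h_def
      by (intro eq_vecI) (auto simp: outer_mult_vec[OF x u] comm_scalar_prod[of x n u] algebra_simps)
    finally show ?thesis .
  qed
  have tAx: "transpose_mat (A - outer x x) = A - outer x x"
    using A x At by (simp add: transpose_minus[of A n n] transpose_outer)
  have t2: "outer u u * (A - outer x x) = (1 - h) \<cdot>\<^sub>m outer u x"
    using mult_outer_right[OF Ax u, of u] tAx Axu u x by (intro eq_matI) auto
  have "(Ainv + c \<cdot>\<^sub>m outer u u) * (A - outer x x) = Ainv * (A - outer x x) + (c \<cdot>\<^sub>m outer u u) * (A - outer x x)"
    by (rule add_mult_distrib_mat) (use Ai u Ax in auto)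
  also have "(c \<cdot>\<^sub>m outer u u) * (A - outer x x) = c \<cdot>\<^sub>m (outer u u * (A - outer x x))"
    by (rule mult_smult_assoc_mat) (use u Ax in auto)
  also have "Ainv * (A - outer x x) + c \<cdot>\<^sub>m (outer u u * (A - outer x x)) = 1\<^sub>m n"
    unfolding t1 t2 using u x hc' by (intro eq_matI) auto
  finally show ?thesis unfolding c_def h_def u_def .
qed



lemma leverage:
  fixes X Ainv :: "real mat"
  assumes X: "X \<in> carrier_mat k d" and Ai: "Ainv \<in> carrier_mat d d"
    and AiA: "Ainv * (transpose_mat X * X) = 1\<^sub>m d" and Ait: "transpose_mat Ainv = Ainv"
    and y: "y \<in> carrier_vec k" and i: "i < k"
    and h: "row X i \<bullet> (Ainv *\<^sub>v row X i) = 1"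
  shows "row X i \<bullet> (Ainv *\<^sub>v (transpose_mat X *\<^sub>v y)) = y $ i"
proof -
  define Hf where "Hf a b = row X a \<bullet> (Ainv *\<^sub>v row X b)" for a b
  define P where "P = Ainv * transpose_mat X"
  define H where "H = X * P"
  have Xt: "transpose_mat X \<in> carrier_mat d k" using X by simp
  have P: "P \<in> carrier_mat d k" using Ai X unfolding P_def by simp
  have H: "H \<in> carrier_mat k k" using X P unfolding H_def by simp
  have rX: "\<And>a. a < k \<Longrightarrow> row X a \<in> carrier_vec d" using X by auto
  have Hidx: "\<And>a b. a < k \<Longrightarrow> b < k \<Longrightarrow> H $$ (a, b) = Hf a b"
    unfolding H_def P_def Hf_def using X Ai by (subst index_mult_mat) (auto simp: col_mult2[OF Ai Xt] mult_mat_vec_def)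
  have Hsym: "\<And>a b. a < k \<Longrightarrow> b < k \<Longrightarrow> Hf a b = Hf b a"
  proof -
    fix a b assume a: "a < k" and b: "b < k"
    have "(transpose_mat Ainv *\<^sub>v row X a) \<bullet> row X b = row X a \<bullet> (Ainv *\<^sub>v row X b)"
      by (rule transpose_vec_mult_scalar[OF Ai rX[OF b] rX[OF a]])
    thus "Hf a b = Hf b a" unfolding Hf_def Ait using comm_scalar_prod[of "row X b" d "Ainv *\<^sub>v row X a"] Ai rX a b
      by simp
  qed
  have PX: "P * X = 1\<^sub>m d" unfolding P_def using AiA Ai Xt X by simp
  have HH: "H * H = H"
  proof -
    have "H * H = X * (P * (X * P))" unfolding H_def
      by (rule assoc_mult_mat[of X k d P k "X*P" k]) (use X P in auto)
    also have "P * (X * P) = (P * X) * P" by (rule assoc_mult_mat[symmetric]) (use X P in auto)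
    finally show ?thesis unfolding PX H_def using P by simp
  qed
  have "(H * H) $$ (i, i) = (\<Sum>l\<in>{0..<k}. H $$ (i, l) * H $$ (l, i))"
    using H i by (simp add: scalar_prod_def)
  hence s0: "(\<Sum>l\<in>{0..<k}. H $$ (i, l) * H $$ (l, i)) = 1"
    using HH Hidx i h unfolding Hf_def[symmetric] by simp
  have sum1: "(\<Sum>l\<in>{0..<k}. Hf i l * Hf i l) = 1"
    unfolding s0[symmetric] using Hidx i Hsym by (intro sum.cong) auto
  have "(\<Sum>l\<in>{0..<k} - {i}. Hf i l * Hf i l) = (\<Sum>l\<in>{0..<k}. Hf i l * Hf i l) - Hf i i * Hf i i"
    using i by (simp add: sum_diff1)
  also have "\<dots> = 0" using sum1 h unfolding Hf_def by simp
  finally have "\<forall>l\<in>{0..<k} - {i}. Hf i l * Hf i l = 0"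
    by (subst sum_nonneg_eq_0_iff[symmetric]) auto
  hence z: "\<And>l. l < k \<Longrightarrow> l \<noteq> i \<Longrightarrow> Hf i l = 0" by auto
  have "(H *\<^sub>v y) $ i = (\<Sum>l\<in>{0..<k}. H $$ (i, l) * y $ l)"
    using H i y by (simp add: scalar_prod_def)
  also have "\<dots> = (\<Sum>l\<in>{0..<k}. (if l = i then y $ i else 0))"
    using Hidx z i h unfolding Hf_def[symmetric] by (intro sum.cong) auto
  also have "\<dots> = y $ i" using i by simp
  finally have "(H *\<^sub>v y) $ i = y $ i" .
  moreover have "H *\<^sub>v y = X *\<^sub>v (Ainv *\<^sub>v (transpose_mat X *\<^sub>v y))"
  proof -
    have "H *\<^sub>v y = X *\<^sub>v (P *\<^sub>v y)" unfolding H_def by (rule assoc_mult_mat_vec) (use X P y in auto)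
    also have "P *\<^sub>v y = Ainv *\<^sub>v (transpose_mat X *\<^sub>v y)" unfolding P_def
      by (rule assoc_mult_mat_vec) (use Ai Xt y in auto)
    finally show ?thesis .
  qed
  ultimately show ?thesis using X i by simp
qed



lemma pinv_eq:
  fixes B :: "real mat"
  assumes B: "B \<in> carrier_mat m n" and N: "N \<in> carrier_mat n n"
    and NM: "N * (transpose_mat B * B) = 1\<^sub>m n" and MN: "(transpose_mat B * B) * N = 1\<^sub>m n"
  shows "pinv B = N * transpose_mat B"
proof -
  define M where "M = transpose_mat B * B"
  have Bt: "transpose_mat B \<in> carrier_mat n m" using B by simp
  have M: "M \<in> carrier_mat n n" using B unfolding M_def by simp
  have Mt: "transpose_mat M = M" unfolding M_def using transpose_mult[OF Bt B] by simp
  have Nt: "transpose_mat N = N"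
  proof -
    have "transpose_mat N = transpose_mat N * (M * N)" using MN N unfolding M_def by simp
    also have "\<dots> = (transpose_mat N * M) * N" using N M by (intro assoc_mult_mat[symmetric]) auto
    also have "transpose_mat N * M = transpose_mat (M * N)" using transpose_mult[OF M N] Mt by simp
    also have "\<dots> = 1\<^sub>m n" using MN unfolding M_def by simp
    finally show ?thesis using N by simp
  qed
  define C where "C = N * transpose_mat B"
  have C: "C \<in> carrier_mat n m" using N Bt unfolding C_def by simp
  have CB: "C * B = 1\<^sub>m n" unfolding C_def using NM N Bt B by (simp add: M_def)
  have c1: "B * C * B = B" using B C CB by simp
  have c2: "C * B * C = C" using C CB by simp
  have BC: "B * C = B * N * transpose_mat B" unfolding C_def using B N Bt by simp
  have c3: "transpose_mat (B * C) = B * C"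
  proof -
    have "transpose_mat (B * C) = transpose_mat C * transpose_mat B" using transpose_mult[OF B C] .
    also have "transpose_mat C = transpose_mat (transpose_mat B) * transpose_mat N"
      unfolding C_def using transpose_mult[OF N Bt] .
    also have "\<dots> = B * N" using Nt by simp
    finally show ?thesis using BC by simp
  qed
  have c4: "transpose_mat (C * B) = C * B" using CB by simp
  show ?thesis unfolding pinv_def C_def[symmetric]
  proof (rule the_equality)
    show "C \<in> carrier_mat (dim_col B) (dim_row B) \<and> B * C * B = B \<and> C * B * C = C \<and>
      transpose_mat (B * C) = B * C \<and> transpose_mat (C * B) = C * B" using C B c1 c2 c3 c4 by auto
  next
    fix D assume D: "D \<in> carrier_mat (dim_col B) (dim_row B) \<and> B * D * B = B \<and> D * B * D = D \<and>
      transpose_mat (B * D) = B * D \<and> transpose_mat (D * B) = D * B"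
    hence Dc: "D \<in> carrier_mat n m" and d1: "B * D * B = B" and d3: "transpose_mat (B * D) = B * D"
      using B by auto
    have BD: "B * D \<in> carrier_mat m m" using B Dc by simp
    have "transpose_mat B = transpose_mat (B * D * B)" using d1 by simp
    also have "\<dots> = transpose_mat B * transpose_mat (B * D)" using transpose_mult[OF BD B] .
    also have "\<dots> = transpose_mat B * (B * D)" using d3 by simp
    also have "\<dots> = M * D" unfolding M_def using Bt B Dc by simp
    finally have "transpose_mat B = M * D" .
    hence "C = N * M * D" unfolding C_def using N M Dc by simp
    also have "\<dots> = D" using NM Dc unfolding M_def by simp
    finally show "D = C" by simp
  qed
qed


lemma (in vec_space) non_distinct_low_rank':
assumes "A \<in> carrier_mat n nc"
and "\<not> distinct (cols A)"
shows "rank A < nc"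
proof -
  obtain S where "maximal S (\<lambda>T. T \<subseteq> set (cols A) \<and> lin_indpt T)"
    using maximal_exists[of "(\<lambda>T. T \<subseteq> set (cols A) \<and> lin_indpt T)" "card (set (cols A))" "{}"]
    by (meson List.finite_set card_mono empty_iff empty_subsetI finite_lin_indpt2 rev_finite_subset)
  then have "card S \<le> card (set (cols A))" by (simp add: card_mono maximal_def)
  then have "card S < nc"
    using assms(1) cols_length card_length \<open>\<not> distinct (cols A)\<close> card_distinct carrier_matD(2) nat_less_le
    by (metis dual_order.antisym dual_order.trans)
  then show ?thesis
    using rank_card_indpt[OF \<open>A \<in> carrier_mat n nc\<close> \<open>maximal S (\<lambda>T. T \<subseteq> set (cols A) \<and> lin_indpt T)\<close>]
    by simp
qed

lemma (in vec_space) rank_inj: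
  assumes A: "A \<in> carrier_mat n nc" and r: "rank A = nc"
    and v: "v \<in> carrier_vec nc" and Av: "A *\<^sub>v v = 0\<^sub>v n"
  shows "v = 0\<^sub>v nc"
proof (rule ccontr)
  assume nz: "v \<noteq> 0\<^sub>v nc"
  show False
  proof (cases "distinct (cols A)")
    case True
    then have "lin_indpt (set (cols A))" using full_rank_lin_indpt r A by auto
    then show False using lin_depI[OF A v nz Av] True by blast
  next
    case False
    then show False using non_distinct_low_rank'[OF A] r by auto
  qed
qed


lemma gram_det:
  fixes X :: "real mat"
  assumes X: "X \<in> carrier_mat k d" and inj: "\<And>v. v \<in> carrier_vec d \<Longrightarrow> X *\<^sub>v v = 0\<^sub>v k \<Longrightarrow> v = 0\<^sub>v d"
  shows "det (transpose_mat X * X) \<noteq> 0"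
proof
  assume "det (transpose_mat X * X) = 0"
  then obtain v where v: "v \<in> carrier_vec d" "v \<noteq> 0\<^sub>v d" "(transpose_mat X * X) *\<^sub>v v = 0\<^sub>v d"
    using det_0_iff_vec_prod_zero_field[of "transpose_mat X * X" d] X by auto
  define w where "w = X *\<^sub>v v"
  have w: "w \<in> carrier_vec k" using X v(1) unfolding w_def by simp
  have "(transpose_mat X *\<^sub>v w) \<bullet> v = w \<bullet> (X *\<^sub>v v)" by (rule transpose_vec_mult_scalar[OF X v(1) w])
  moreover have "transpose_mat X *\<^sub>v w = 0\<^sub>v d" using v X unfolding w_def by simp
  ultimately have "w \<bullet> w = 0" using v unfolding w_def by simp
  hence "(\<Sum>i<k. w $ i * w $ i) = 0" using w unfolding scalar_prod_def by (simp add: atLeast0LessThan)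
  hence "\<forall>i\<in>{..<k}. w $ i * w $ i = 0" by (subst sum_nonneg_eq_0_iff[symmetric]) auto
  hence "w = 0\<^sub>v k" using w by (intro eq_vecI) auto
  thus False using inj[OF v(1)] v(2) unfolding w_def by simp
qed



lemma term_i:
  fixes X Ainv :: "real mat" and y :: "real vec"
  assumes X: "X \<in> carrier_mat k d" and Ai: "Ainv \<in> carrier_mat d d"
    and AAi: "(transpose_mat X * X) * Ainv = 1\<^sub>m d" and AiA: "Ainv * (transpose_mat X * X) = 1\<^sub>m d"
    and Ait: "transpose_mat Ainv = Ainv" and dA: "det (transpose_mat X * X) \<noteq> 0"
    and y: "y \<in> carrier_vec k" and i: "i < k" and j: "j < d" and dk: "d < k"
  shows "det (transpose_mat (del_row X i) * del_row X i) / ((real k - real d) * det (transpose_mat X * X))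
      * (pinv (del_row X i) *\<^sub>v del_entry y i) $ j
    = ((1 - row X i \<bullet> (Ainv *\<^sub>v row X i)) * (Ainv *\<^sub>v (transpose_mat X *\<^sub>v y)) $ j
       + (Ainv *\<^sub>v row X i) $ j * (row X i \<bullet> (Ainv *\<^sub>v (transpose_mat X *\<^sub>v y)) - y $ i)) / (real k - real d)"
proof -
  define A where "A = transpose_mat X * X"
  define x where "x = row X i"
  define u where "u = Ainv *\<^sub>v x"
  define h where "h = x \<bullet> u"
  define b where "b = transpose_mat X *\<^sub>v y"
  define w where "w = Ainv *\<^sub>v b"
  define Xi where "Xi = del_row X i"
  define yi where "yi = del_entry y i"
  have Xt: "transpose_mat X \<in> carrier_mat d k" using X by simp
  have A: "A \<in> carrier_mat d d" using X unfolding A_def by simp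
  have At: "transpose_mat A = A" unfolding A_def using transpose_mult[OF Xt X] by simp
  have x: "x \<in> carrier_vec d" using X i unfolding x_def by auto
  have u: "u \<in> carrier_vec d" using Ai x unfolding u_def by simp
  have b: "b \<in> carrier_vec d" using X y unfolding b_def by simp
  have Xi: "Xi \<in> carrier_mat (k-1) d" unfolding Xi_def by (rule del_row_carrier[OF X])
  have G: "transpose_mat Xi * Xi = A - outer x x" unfolding Xi_def A_def x_def by (rule gram_del_row[OF X i])
  have Gy: "transpose_mat Xi *\<^sub>v yi = b - (y $ i) \<cdot>\<^sub>v x"
    unfolding Xi_def yi_def b_def x_def by (rule gramy_del_row[OF X i y])
  have detG: "det (transpose_mat Xi * Xi) = det A * (1 - h)"
    unfolding G h_def u_def using det_update[OF A Ai AAi[folded A_def] x] .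
  have ub: "u \<bullet> b = x \<bullet> w"
    using transpose_vec_mult_scalar[OF Ai b x] Ait unfolding u_def w_def by simp
  have hx: "u \<bullet> x = h" unfolding h_def using comm_scalar_prod[OF u x] .
  have goal: "det (transpose_mat Xi * Xi) / ((real k - real d) * det A) * (pinv Xi *\<^sub>v yi) $ j
     = ((1 - h) * w $ j + u $ j * (x \<bullet> w - y $ i)) / (real k - real d)"
  proof (cases "h = 1")
    case True
    have "x \<bullet> w = y $ i" unfolding x_def w_def b_def
      by (rule leverage[OF X Ai AiA Ait y i]) (use True in \<open>simp add: h_def u_def x_def\<close>)
    thus ?thesis using True detG by simp
  next
    case False
    define c where "c = 1 / (1 - h)"
    define N where "N = Ainv + c \<cdot>\<^sub>m outer u u"
    have N: "N \<in> carrier_mat d d" unfolding N_def using Ai u by simp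
    have Ax: "A - outer x x \<in> carrier_mat d d" using A x by (intro minus_carrier_mat) auto
    have NA: "N * (A - outer x x) = 1\<^sub>m d" unfolding N_def c_def u_def
      using inv_update[OF A Ai AAi[folded A_def] AiA[folded A_def] At x] False unfolding h_def u_def by simp
    have AN: "(A - outer x x) * N = 1\<^sub>m d" by (rule mat_mult_left_right_inverse[OF N Ax NA])
    have pv: "pinv Xi = N * transpose_mat Xi"
      by (rule pinv_eq[OF Xi N]) (use NA AN G in auto)
    have yi: "yi \<in> carrier_vec (k-1)" unfolding yi_def by (rule del_entry_carrier[OF y])
    have "pinv Xi *\<^sub>v yi = N *\<^sub>v (b - (y $ i) \<cdot>\<^sub>v x)"
      unfolding pv Gy[symmetric] by (rule assoc_mult_mat_vec) (use N Xi yi in auto)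
    also have "\<dots> = Ainv *\<^sub>v (b - (y $ i) \<cdot>\<^sub>v x) + (c \<cdot>\<^sub>m outer u u) *\<^sub>v (b - (y $ i) \<cdot>\<^sub>v x)"
      unfolding N_def by (rule add_mult_distrib_mat_vec) (use Ai u b x in auto)
    also have "(c \<cdot>\<^sub>m outer u u) *\<^sub>v (b - (y $ i) \<cdot>\<^sub>v x) = c \<cdot>\<^sub>v ((u \<bullet> (b - (y $ i) \<cdot>\<^sub>v x)) \<cdot>\<^sub>v u)"
      using smult_mat_vec[of "outer u u" d d "b - (y $ i) \<cdot>\<^sub>v x" c] outer_mult_vec[of u d "b - (y $ i) \<cdot>\<^sub>v x" u] u b x
      by simp
    also have "u \<bullet> (b - (y $ i) \<cdot>\<^sub>v x) = x \<bullet> w - y $ i * h"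
      using u b x ub hx by (simp add: scalar_prod_minus_distrib)
    also have "Ainv *\<^sub>v (b - (y $ i) \<cdot>\<^sub>v x) = w - (y $ i) \<cdot>\<^sub>v u"
      unfolding w_def u_def using Ai b x by (simp add: mult_minus_distrib_mat_vec[of Ainv d d] mult_mat_vec[of Ainv d d])
    finally have pj: "(pinv Xi *\<^sub>v yi) $ j = w $ j - y $ i * u $ j + c * ((x \<bullet> w - y $ i * h) * u $ j)"
      using j u Ai b unfolding w_def by simp
    have kd: "real k - real d \<noteq> 0" using dk by simp
    have dA': "det A \<noteq> 0" using dA unfolding A_def .
    have h1: "1 - h \<noteq> 0" using False by simp
    have e1: "det A * (1 - h) / ((real k - real d) * det A) = (1 - h) / (real k - real d)"
      using dA' by simp
    have e2: "(1 - h) * (w $ j - y $ i * u $ j + 1 / (1 - h) * ((x \<bullet> w - y $ i * h) * u $ j))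
        = (1 - h) * w $ j + u $ j * (x \<bullet> w - y $ i)"
      using h1 by (simp add: field_simps)
    show ?thesis unfolding pj detG c_def e1 using e2 by simp
  qed
  thus ?thesis unfolding Xi_def yi_def A_def x_def u_def h_def w_def b_def .
qed



theorem lemma2:
  fixes X :: "real mat" and y :: "real vec" and k d :: nat
  assumes "d < k"
    and "X \<in> carrier_mat k d"
    and "vec_space.rank k X = d"
    and "y \<in> carrier_vec k"
  shows "pinv X *\<^sub>v y =
    vec d (\<lambda>j. \<Sum>i<k.
      (det (transpose_mat (del_row X i) * del_row X i)
         / ((real k - real d) * det (transpose_mat X * X)))
      * (pinv (del_row X i) *\<^sub>v del_entry y i) $ j)"
proof -
  note dk = assms(1) and X = assms(2) and r = assms(3) and y = assms(4)
  define A where "A = transpose_mat X * X"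
  have Xt: "transpose_mat X \<in> carrier_mat d k" using X by simp
  have A: "A \<in> carrier_mat d d" using X unfolding A_def by simp
  have inj: "\<And>v. v \<in> carrier_vec d \<Longrightarrow> X *\<^sub>v v = 0\<^sub>v k \<Longrightarrow> v = 0\<^sub>v d"
    using vec_space.rank_inj[OF X r] by blast
  have dA: "det A \<noteq> 0" unfolding A_def by (rule gram_det[OF X inj])
  define Ainv where "Ainv = (1 / det A) \<cdot>\<^sub>m adj_mat A"
  have Ai: "Ainv \<in> carrier_mat d d" unfolding Ainv_def using adj_mat(1)[OF A] by simp
  have AAi: "A * Ainv = 1\<^sub>m d"
  proof -
    have "A * Ainv = (1 / det A) \<cdot>\<^sub>m (A * adj_mat A)" unfolding Ainv_def
      by (rule mult_smult_distrib[OF A adj_mat(1)[OF A]])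
    also have "\<dots> = 1\<^sub>m d" unfolding adj_mat(2)[OF A] using dA by (intro eq_matI) auto
    finally show ?thesis .
  qed
  have AiA: "Ainv * A = 1\<^sub>m d"
  proof -
    have "Ainv * A = (1 / det A) \<cdot>\<^sub>m (adj_mat A * A)" unfolding Ainv_def
      by (rule mult_smult_assoc_mat[OF adj_mat(1)[OF A] A])
    also have "\<dots> = 1\<^sub>m d" unfolding adj_mat(3)[OF A] using dA by (intro eq_matI) auto
    finally show ?thesis .
  qed
  have At: "transpose_mat A = A" unfolding A_def using transpose_mult[OF Xt X] by simp
  have Ait: "transpose_mat Ainv = Ainv"
  proof -
    have "transpose_mat Ainv * A = 1\<^sub>m d" using transpose_mult[OF A Ai] AAi At by simp
    have "transpose_mat Ainv = transpose_mat Ainv * (A * Ainv)" using AAi Ai by simp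
    also have "\<dots> = (transpose_mat Ainv * A) * Ainv" by (rule assoc_mult_mat[symmetric]) (use A Ai in auto)
    also have "transpose_mat Ainv * A = 1\<^sub>m d" using transpose_mult[OF A Ai] AAi At by simp
    finally show ?thesis using Ai by simp
  qed
  have pX: "pinv X = Ainv * transpose_mat X"
    by (rule pinv_eq[OF X Ai]) (use AAi AiA A_def in auto)
  define w where "w = Ainv *\<^sub>v (transpose_mat X *\<^sub>v y)"
  define P where "P = Ainv * transpose_mat X"
  have P: "P \<in> carrier_mat d k" unfolding P_def using Ai Xt by simp
  have w: "w \<in> carrier_vec d" unfolding w_def using Ai Xt y by simp
  have lhs: "pinv X *\<^sub>v y = w" unfolding pX w_def by (rule assoc_mult_mat_vec) (use Ai Xt y in auto)
  have Pidx: "\<And>a i. a < d \<Longrightarrow> i < k \<Longrightarrow> P $$ (a, i) = (Ainv *\<^sub>v row X i) $ a"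
    unfolding P_def using Ai X by auto
  have PX: "P * X = 1\<^sub>m d" unfolding P_def using AiA A_def Ai Xt X by simp
  have Py: "P *\<^sub>v y = w" unfolding P_def w_def by (rule assoc_mult_mat_vec) (use Ai Xt y in auto)
  have PXw: "P *\<^sub>v (X *\<^sub>v w) = w"
  proof -
    have "P *\<^sub>v (X *\<^sub>v w) = (P * X) *\<^sub>v w" by (rule assoc_mult_mat_vec[symmetric]) (use P X w in auto)
    thus ?thesis using PX w by simp
  qed
  have s3: "\<And>j. j < d \<Longrightarrow> (\<Sum>i<k. (Ainv *\<^sub>v row X i) $ j * y $ i) = w $ j"
  proof -
    fix j assume j: "j < d"
    have "(P *\<^sub>v y) $ j = (\<Sum>i\<in>{0..<k}. P $$ (j, i) * y $ i)" using P j y by (simp add: scalar_prod_def)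
    thus "(\<Sum>i<k. (Ainv *\<^sub>v row X i) $ j * y $ i) = w $ j" using Py Pidx j
      by (simp add: atLeast0LessThan)
  qed
  have s2: "\<And>j. j < d \<Longrightarrow> (\<Sum>i<k. (Ainv *\<^sub>v row X i) $ j * (row X i \<bullet> w)) = w $ j"
  proof -
    fix j assume j: "j < d"
    have "(P *\<^sub>v (X *\<^sub>v w)) $ j = (\<Sum>i\<in>{0..<k}. P $$ (j, i) * (X *\<^sub>v w) $ i)"
      using P j X w by (simp add: scalar_prod_def)
    also have "\<dots> = (\<Sum>i<k. (Ainv *\<^sub>v row X i) $ j * (row X i \<bullet> w))"
      using Pidx j X by (simp add: atLeast0LessThan)
    finally show "(\<Sum>i<k. (Ainv *\<^sub>v row X i) $ j * (row X i \<bullet> w)) = w $ j" using PXw by simp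
  qed
  have s1: "(\<Sum>i<k. row X i \<bullet> (Ainv *\<^sub>v row X i)) = real d"
  proof -
    have "(\<Sum>i<k. row X i \<bullet> (Ainv *\<^sub>v row X i)) = (\<Sum>i<k. \<Sum>a<d. P $$ (a, i) * X $$ (i, a))"
      using X Ai Pidx by (intro sum.cong) (auto simp: scalar_prod_def atLeast0LessThan mult.commute)
    also have "\<dots> = (\<Sum>a<d. \<Sum>i<k. P $$ (a, i) * X $$ (i, a))" by (rule sum.swap)
    also have "\<dots> = (\<Sum>a<d. (P * X) $$ (a, a))"
      using P X by (intro sum.cong) (auto simp: scalar_prod_def atLeast0LessThan)
    also have "\<dots> = real d" unfolding PX by simp
    finally show ?thesis .
  qed
  show ?thesis unfolding lhs
  proof (rule eq_vecI)
    show "dim_vec w = dim_vec (vec d (\<lambda>j. \<Sum>i<k.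
      (det (transpose_mat (del_row X i) * del_row X i)
         / ((real k - real d) * det (transpose_mat X * X)))
      * (pinv (del_row X i) *\<^sub>v del_entry y i) $ j))" using w by simp
    fix j assume "j < dim_vec (vec d (\<lambda>j. \<Sum>i<k.
      (det (transpose_mat (del_row X i) * del_row X i)
         / ((real k - real d) * det (transpose_mat X * X)))
      * (pinv (del_row X i) *\<^sub>v del_entry y i) $ j))"
    hence j: "j < d" by simp
    have "(\<Sum>i<k. (det (transpose_mat (del_row X i) * del_row X i)
         / ((real k - real d) * det (transpose_mat X * X)))
      * (pinv (del_row X i) *\<^sub>v del_entry y i) $ j)
      = (\<Sum>i<k. ((1 - row X i \<bullet> (Ainv *\<^sub>v row X i)) * w $ j
       + (Ainv *\<^sub>v row X i) $ j * (row X i \<bullet> w - y $ i)) / (real k - real d))"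
      unfolding w_def
      by (intro sum.cong refl term_i[OF X Ai AAi[unfolded A_def] AiA[unfolded A_def] Ait dA[unfolded A_def] y _ j dk]) simp
    also have "\<dots> = (\<Sum>i<k. ((1 - row X i \<bullet> (Ainv *\<^sub>v row X i)) * w $ j
       + (Ainv *\<^sub>v row X i) $ j * (row X i \<bullet> w) - (Ainv *\<^sub>v row X i) $ j * y $ i)) / (real k - real d)"
      by (simp add: sum_divide_distrib algebra_simps)
    also have "(\<Sum>i<k. ((1 - row X i \<bullet> (Ainv *\<^sub>v row X i)) * w $ j
       + (Ainv *\<^sub>v row X i) $ j * (row X i \<bullet> w) - (Ainv *\<^sub>v row X i) $ j * y $ i))
       = real k * w $ j - (\<Sum>i<k. row X i \<bullet> (Ainv *\<^sub>v row X i)) * w $ j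
         + (\<Sum>i<k. (Ainv *\<^sub>v row X i) $ j * (row X i \<bullet> w)) - (\<Sum>i<k. (Ainv *\<^sub>v row X i) $ j * y $ i)"
      by (simp add: sum.distrib sum_subtractf sum_distrib_right sum_distrib_left algebra_simps)
    also have "\<dots> = (real k - real d) * w $ j" unfolding s1 s2[OF j] s3[OF j] by (simp add: algebra_simps)
    finally show "w $ j = vec d (\<lambda>j. \<Sum>i<k.
      (det (transpose_mat (del_row X i) * del_row X i)
         / ((real k - real d) * det (transpose_mat X * X)))
      * (pinv (del_row X i) *\<^sub>v del_entry y i) $ j) $ j" using j dk by simp
  qed
qed


end
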